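(* Let $\phi$ and $\psi$ be linear formulae on variable sets $\mathcal{V}_1$ and $\mathcal{V}_2$ respectively, and let $\mathsf r:\phi\to\psi$ be a linear inference. Then there is a linear inference $\mathsf r':\phi'\to\psi'$ with $\phi'$ and $\psi'$ linear formulae on $\mathcal{V}_1\cap\mathcal{V}_2$ such that $\mathsf r$ is $\{\mathsf{s},\mathsf{m},\mathsf r'\}$-derivable with units.
   Context: Fix a countably infinite set of variables. Linear formulae on a finite set $\mathcal{V}$ of variables are defined inductively: - $\top,\bot$ are linear formulae on $\emptyset$. - $x$ and $\neg x$ are linear formulae on $\{x\}$. - If $\phi$ is on $\mathcal{V}_1$, $\psi$ is on $\mathcal{V}_2$ and $\mathcal{V}_1\cap\mathcal{V}_2=\emptyset$, then $\phi\lor\psi$ and $\phi\land\psi$ are on $\mathcal{V}_1\cup\mathcal{V}_2$. Formulae are evaluated under Boolean assignments as usual. A linear inference $\phi\to\psi$ is a pair of linear formulae (possibly on different variable sets) such that every assignment satisfying $\phi$ satisfies $\psi$. A congruence is an equivalence relation closed under $\land$- and $\lor$-contexts on either side. - $\sim_{\mathsf{ac}}$ is the smallest congruence containing commutativity and associativity of $\land,\lor$. - $\sim_{\mathsf{u}}$ is the smallest congruence containing $\phi\land\top\sim\phi$, $\top\land\phi\sim\phi$, $\phi\lor\bot\sim\phi$, $\bot\lor\phi\sim\phi$, $\phi\land\bot\sim\bot$, $\bot\land\phi\sim\bot$, $\phi\lor\top\sim\top$, $\top\lor\phi\sim\top$. - $\sim_{\mathsf{acu}}$ is the smallest congruence containing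 both. For a set $S$ of linear inferences, $\to_S$ is the smallest relation containing $S$ and closed under substitution (of linear formulae for variables, keeping linearity) and contexts. Write $\phi\rightsquigarrow_{S\mathsf u}\psi$ if $\phi\sim_{\mathsf{acu}}\phi'\to_S\psi'\sim_{\mathsf{acu}}\psi$ for some $\phi',\psi'$. An inference $\phi\to\psi$ is $S$-derivable with units if $\phi,\psi$ are related by the reflexive-transitive closure of $\rightsquigarrow_{S\mathsf u}\cup\sim_{\mathsf{acu}}$. Switch $\mathsf{s}$ is $x\land(y\lor z)\to(x\land y)\lor z$; medial $\mathsf{m}$ is $(w\land x)\lor(y\land z)\to(w\lor y)\land(x\lor z)$. *)

theory Defs
  imports Main
begin

datatype 'v frm = Top | Bot | Var 'v | NVar 'v | And "'v frm" "'v frm" | Or "'v frm" "'v frm"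

fun vars :: "'v frm \<Rightarrow> 'v set" where
  "vars Top = {}" | "vars Bot = {}" | "vars (Var x) = {x}" | "vars (NVar x) = {x}"
| "vars (And a b) = vars a \<union> vars b" | "vars (Or a b) = vars a \<union> vars b"

fun linear :: "'v frm \<Rightarrow> bool" where
  "linear Top = True" | "linear Bot = True" | "linear (Var x) = True" | "linear (NVar x) = True"
| "linear (And a b) = (linear a \<and> linear b \<and> vars a \<inter> vars b = {})"
| "linear (Or a b) = (linear a \<and> linear b \<and> vars a \<inter> vars b = {})"

definition linear_on :: "'v frm \<Rightarrow> 'v set \<Rightarrow> bool" where
  "linear_on \<phi> V \<longleftrightarrow> linear \<phi> \<and> vars \<phi> = V"

fun eval :: "('v \<Rightarrow> bool) \<Rightarrow> 'v frm \<Rightarrow> bool" where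
  "eval \<sigma> Top = True" | "eval \<sigma> Bot = False" | "eval \<sigma> (Var x) = \<sigma> x"
| "eval \<sigma> (NVar x) = (\<not> \<sigma> x)"
| "eval \<sigma> (And a b) = (eval \<sigma> a \<and> eval \<sigma> b)"
| "eval \<sigma> (Or a b) = (eval \<sigma> a \<or> eval \<sigma> b)"

definition linear_inference :: "'v frm \<Rightarrow> 'v frm \<Rightarrow> bool" where
  "linear_inference \<phi> \<psi> \<longleftrightarrow> linear \<phi> \<and> linear \<psi> \<and> (\<forall>\<sigma>. eval \<sigma> \<phi> \<longrightarrow> eval \<sigma> \<psi>)"

fun neg :: "'v frm \<Rightarrow> 'v frm" where
  "neg Top = Bot" | "neg Bot = Top" | "neg (Var x) = NVar x" | "neg (NVar x) = Var x"
| "neg (And a b) = Or (neg a) (neg b)" | "neg (Or a b) = And (neg a) (neg b)"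

fun subst :: "('v \<Rightarrow> 'v frm) \<Rightarrow> 'v frm \<Rightarrow> 'v frm" where
  "subst s Top = Top" | "subst s Bot = Bot" | "subst s (Var x) = s x"
| "subst s (NVar x) = neg (s x)"
| "subst s (And a b) = And (subst s a) (subst s b)"
| "subst s (Or a b) = Or (subst s a) (subst s b)"

inductive acu :: "'v frm \<Rightarrow> 'v frm \<Rightarrow> bool" where
  refl: "linear a \<Longrightarrow> acu a a"
| sym: "acu a b \<Longrightarrow> acu b a"
| trans: "acu a b \<Longrightarrow> acu b c \<Longrightarrow> acu a c"
| and_comm: "linear (And a b) \<Longrightarrow> acu (And a b) (And b a)"
| or_comm: "linear (Or a b) \<Longrightarrow> acu (Or a b) (Or b a)"
| and_assoc: "linear (And a (And b c)) \<Longrightarrow> acu (And a (And b c)) (And (And a b) c)"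
| or_assoc: "linear (Or a (Or b c)) \<Longrightarrow> acu (Or a (Or b c)) (Or (Or a b) c)"
| and_top_r: "linear a \<Longrightarrow> acu (And a Top) a"
| and_top_l: "linear a \<Longrightarrow> acu (And Top a) a"
| or_bot_r: "linear a \<Longrightarrow> acu (Or a Bot) a"
| or_bot_l: "linear a \<Longrightarrow> acu (Or Bot a) a"
| and_bot_r: "linear a \<Longrightarrow> acu (And a Bot) Bot"
| and_bot_l: "linear a \<Longrightarrow> acu (And Bot a) Bot"
| or_top_r: "linear a \<Longrightarrow> acu (Or a Top) Top"
| or_top_l: "linear a \<Longrightarrow> acu (Or Top a) Top"
| ctx_and_l: "acu a b \<Longrightarrow> linear (And a c) \<Longrightarrow> linear (And b c) \<Longrightarrow> acu (And a c) (And b c)"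
| ctx_and_r: "acu a b \<Longrightarrow> linear (And c a) \<Longrightarrow> linear (And c b) \<Longrightarrow> acu (And c a) (And c b)"
| ctx_or_l: "acu a b \<Longrightarrow> linear (Or a c) \<Longrightarrow> linear (Or b c) \<Longrightarrow> acu (Or a c) (Or b c)"
| ctx_or_r: "acu a b \<Longrightarrow> linear (Or c a) \<Longrightarrow> linear (Or c b) \<Longrightarrow> acu (Or c a) (Or c b)"

inductive rstep :: "('v frm \<times> 'v frm) set \<Rightarrow> 'v frm \<Rightarrow> 'v frm \<Rightarrow> bool" for S where
  base: "(a, b) \<in> S \<Longrightarrow> rstep S a b"
| sub: "rstep S a b \<Longrightarrow> linear (subst s a) \<Longrightarrow> linear (subst s b)
        \<Longrightarrow> rstep S (subst s a) (subst s b)"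
| ctx_and_l: "rstep S a b \<Longrightarrow> linear (And a c) \<Longrightarrow> linear (And b c) \<Longrightarrow> rstep S (And a c) (And b c)"
| ctx_and_r: "rstep S a b \<Longrightarrow> linear (And c a) \<Longrightarrow> linear (And c b) \<Longrightarrow> rstep S (And c a) (And c b)"
| ctx_or_l: "rstep S a b \<Longrightarrow> linear (Or a c) \<Longrightarrow> linear (Or b c) \<Longrightarrow> rstep S (Or a c) (Or b c)"
| ctx_or_r: "rstep S a b \<Longrightarrow> linear (Or c a) \<Longrightarrow> linear (Or c b) \<Longrightarrow> rstep S (Or c a) (Or c b)"

definition rstep_u :: "('v frm \<times> 'v frm) set \<Rightarrow> 'v frm \<Rightarrow> 'v frm \<Rightarrow> bool" where
  "rstep_u S a b \<longleftrightarrow> (\<exists>a' b'. acu a a' \<and> rstep S a' b' \<and> acu b' b)"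

definition derivable_u :: "('v frm \<times> 'v frm) set \<Rightarrow> 'v frm \<Rightarrow> 'v frm \<Rightarrow> bool" where
  "derivable_u S a b \<longleftrightarrow> (\<lambda>x y. rstep_u S x y \<or> acu x y)\<^sup>*\<^sup>* a b"

definition switch :: "nat frm \<times> nat frm" where
  "switch = (And (Var 0) (Or (Var 1) (Var 2)), Or (And (Var 0) (Var 1)) (Var 2))"

definition medial :: "nat frm \<times> nat frm" where
  "medial = (Or (And (Var 0) (Var 1)) (And (Var 2) (Var 3)),
             And (Or (Var 0) (Var 2)) (Or (Var 1) (Var 3)))"

end

theory Submission
  imports Defs
begin

fun repl :: "'v set \<Rightarrow> 'v frm \<Rightarrow> 'v frm \<Rightarrow> 'v frm" where
  "repl X c Top = Top" | "repl X c Bot = Bot"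
| "repl X c (Var x) = (if x \<in> X then c else Var x)"
| "repl X c (NVar x) = (if x \<in> X then c else NVar x)"
| "repl X c (And a b) = And (repl X c a) (repl X c b)"
| "repl X c (Or a b) = Or (repl X c a) (repl X c b)"

lemma vars_repl: "vars c = {} \<Longrightarrow> vars (repl X c a) = vars a - X"
  by (induction a) auto

lemma linear_repl: "vars c = {} \<Longrightarrow> linear c \<Longrightarrow> linear a \<Longrightarrow> linear (repl X c a)"
  by (induction a) (auto simp: vars_repl)

lemma eval_cong: "(\<forall>v\<in>vars a. \<sigma> v = \<tau> v) \<Longrightarrow> eval \<sigma> a = eval \<tau> a"
  by (induction a) auto

lemma repl_sem: "linear a \<Longrightarrow> vars c = {} \<Longrightarrow>
   \<exists>\<tau>. (\<forall>v. v \<notin> X \<longrightarrow> \<tau> v = \<sigma> v) \<and> eval \<tau> a = eval \<sigma> (repl X c a)"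
proof (induction a)
  case (Var x)
  show ?case
  proof (cases "x \<in> X")
    case True
    then show ?thesis by (intro exI[of _ "\<sigma>(x := eval \<sigma> c)"]) auto
  qed (intro exI[of _ \<sigma>], auto)
next
  case (NVar x)
  show ?case
  proof (cases "x \<in> X")
    case True
    then show ?thesis by (intro exI[of _ "\<sigma>(x := \<not> eval \<sigma> c)"]) auto
  qed (intro exI[of _ \<sigma>], auto)
next
  case (And a b)
  then obtain ta tb where ta: "(\<forall>v. v \<notin> X \<longrightarrow> ta v = \<sigma> v) \<and> eval ta a = eval \<sigma> (repl X c a)"
    and tb: "(\<forall>v. v \<notin> X \<longrightarrow> tb v = \<sigma> v) \<and> eval tb b = eval \<sigma> (repl X c b)" by auto
  let ?t = "\<lambda>v. if v \<in> vars a then ta v else tb v"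
  have "eval ?t a = eval ta a" by (rule eval_cong) auto
  moreover have "eval ?t b = eval tb b" using And.prems by (intro eval_cong) auto
  ultimately show ?case using ta tb by (intro exI[of _ ?t]) auto
next
  case (Or a b)
  then obtain ta tb where ta: "(\<forall>v. v \<notin> X \<longrightarrow> ta v = \<sigma> v) \<and> eval ta a = eval \<sigma> (repl X c a)"
    and tb: "(\<forall>v. v \<notin> X \<longrightarrow> tb v = \<sigma> v) \<and> eval tb b = eval \<sigma> (repl X c b)" by auto
  let ?t = "\<lambda>v. if v \<in> vars a then ta v else tb v"
  have "eval ?t a = eval ta a" by (rule eval_cong) auto
  moreover have "eval ?t b = eval tb b" using Or.prems by (intro eval_cong) auto
  ultimately show ?case using ta tb by (intro exI[of _ ?t]) auto
qed (auto intro: exI[of _ \<sigma>])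

definition stp :: "('v frm \<times> 'v frm) set \<Rightarrow> 'v set \<Rightarrow> 'v frm \<Rightarrow> 'v frm \<Rightarrow> bool" where
  "stp S V x y \<longleftrightarrow> (acu x y \<or> rstep S x y) \<and> linear x \<and> linear y \<and> vars x \<subseteq> V \<and> vars y \<subseteq> V"

lemma rtranclp_map:
  assumes "\<And>x y. P x y \<Longrightarrow> Q (f x) (f y)" "P\<^sup>*\<^sup>* a b"
  shows "Q\<^sup>*\<^sup>* (f a) (f b)"
  using assms(2)
proof (induction rule: rtranclp_induct)
  case (step y z) then show ?case using assms(1) by (metis rtranclp.rtrancl_into_rtrancl)
qed auto

lemma stp_mono: "(stp S V)\<^sup>*\<^sup>* a b \<Longrightarrow> V \<subseteq> W \<Longrightarrow> (stp S W)\<^sup>*\<^sup>* a b"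
  by (rule mono_rtranclp[rule_format]) (auto simp: stp_def)

lemma ctx_andl: "(stp S V)\<^sup>*\<^sup>* a b \<Longrightarrow> linear c \<Longrightarrow> vars c \<inter> V = {}
  \<Longrightarrow> (stp S (V \<union> vars c))\<^sup>*\<^sup>* (And a c) (And b c)"
proof -
  assume h: "(stp S V)\<^sup>*\<^sup>* a b" "linear c" "vars c \<inter> V = {}"
  have "stp S (V \<union> vars c) ((\<lambda>x. And x c) x) ((\<lambda>x. And x c) y)" if "stp S V x y" for x y
    proof -
    have L: "linear (And x c)" "linear (And y c)" using that h by (auto simp: stp_def)
    have "acu x y \<or> rstep S x y" using that by (simp add: stp_def)
    then have "acu (And x c) (And y c) \<or> rstep S (And x c) (And y c)" using acu.ctx_and_l[OF _ L] rstep.ctx_and_l[OF _ L] by blast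
    then show ?thesis using L that h by (auto simp: stp_def)
  qed
  from rtranclp_map[where P="stp S V" and Q="stp S (V \<union> vars c)" and f="(\<lambda>x. And x c)", OF this h(1)] show ?thesis by simp
qed

lemma ctx_andr: "(stp S V)\<^sup>*\<^sup>* a b \<Longrightarrow> linear c \<Longrightarrow> vars c \<inter> V = {}
  \<Longrightarrow> (stp S (V \<union> vars c))\<^sup>*\<^sup>* (And c a) (And c b)"
proof -
  assume h: "(stp S V)\<^sup>*\<^sup>* a b" "linear c" "vars c \<inter> V = {}"
  have "stp S (V \<union> vars c) ((\<lambda>x. And c x) x) ((\<lambda>x. And c x) y)" if "stp S V x y" for x y
    proof -
    have L: "linear (And c x)" "linear (And c y)" using that h by (auto simp: stp_def)
    have "acu x y \<or> rstep S x y" using that by (simp add: stp_def)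
    then have "acu (And c x) (And c y) \<or> rstep S (And c x) (And c y)" using acu.ctx_and_r[OF _ L] rstep.ctx_and_r[OF _ L] by blast
    then show ?thesis using L that h by (auto simp: stp_def)
  qed
  from rtranclp_map[where P="stp S V" and Q="stp S (V \<union> vars c)" and f="(\<lambda>x. And c x)", OF this h(1)] show ?thesis by simp
qed

lemma ctx_orl: "(stp S V)\<^sup>*\<^sup>* a b \<Longrightarrow> linear c \<Longrightarrow> vars c \<inter> V = {}
  \<Longrightarrow> (stp S (V \<union> vars c))\<^sup>*\<^sup>* (Or a c) (Or b c)"
proof -
  assume h: "(stp S V)\<^sup>*\<^sup>* a b" "linear c" "vars c \<inter> V = {}"
  have "stp S (V \<union> vars c) ((\<lambda>x. Or x c) x) ((\<lambda>x. Or x c) y)" if "stp S V x y" for x y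
    proof -
    have L: "linear (Or x c)" "linear (Or y c)" using that h by (auto simp: stp_def)
    have "acu x y \<or> rstep S x y" using that by (simp add: stp_def)
    then have "acu (Or x c) (Or y c) \<or> rstep S (Or x c) (Or y c)" using acu.ctx_or_l[OF _ L] rstep.ctx_or_l[OF _ L] by blast
    then show ?thesis using L that h by (auto simp: stp_def)
  qed
  from rtranclp_map[where P="stp S V" and Q="stp S (V \<union> vars c)" and f="(\<lambda>x. Or x c)", OF this h(1)] show ?thesis by simp
qed

lemma ctx_orr: "(stp S V)\<^sup>*\<^sup>* a b \<Longrightarrow> linear c \<Longrightarrow> vars c \<inter> V = {}
  \<Longrightarrow> (stp S (V \<union> vars c))\<^sup>*\<^sup>* (Or c a) (Or c b)"
proof -
  assume h: "(stp S V)\<^sup>*\<^sup>* a b" "linear c" "vars c \<inter> V = {}"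
  have "stp S (V \<union> vars c) ((\<lambda>x. Or c x) x) ((\<lambda>x. Or c x) y)" if "stp S V x y" for x y
    proof -
    have L: "linear (Or c x)" "linear (Or c y)" using that h by (auto simp: stp_def)
    have "acu x y \<or> rstep S x y" using that by (simp add: stp_def)
    then have "acu (Or c x) (Or c y) \<or> rstep S (Or c x) (Or c y)" using acu.ctx_or_r[OF _ L] rstep.ctx_or_r[OF _ L] by blast
    then show ?thesis using L that h by (auto simp: stp_def)
  qed
  from rtranclp_map[where P="stp S V" and Q="stp S (V \<union> vars c)" and f="(\<lambda>x. Or c x)", OF this h(1)] show ?thesis by simp
qed

lemma switch_inst:
  assumes "switch \<in> S" "linear (And a (Or b c))" "linear (Or (And a b) c)"
  shows "rstep S (And a (Or b c)) (Or (And a b) c)"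
proof -
  let ?s = "\<lambda>n::nat. if n = 0 then a else if n = 1 then b else c"
  have "rstep S (And (Var 0) (Or (Var 1) (Var 2))) (Or (And (Var 0) (Var 1)) (Var 2))"
    using assms(1) by (auto simp: switch_def intro: rstep.base)
  from rstep.sub[OF this, of ?s] show ?thesis using assms by simp
qed

lemma to_top:
  assumes "switch \<in> S" "linear a"
  shows "(stp S (vars a))\<^sup>*\<^sup>* a Top"
proof -
  have l: "linear Top" "linear (Or Bot Top)" by auto
  have "acu a (And a (Or Bot Top))"
    using acu.trans[OF acu.sym[OF acu.and_top_r[OF assms(2)]]
        acu.ctx_and_r[OF acu.sym[OF acu.or_bot_l[OF l(1)]]]] assms(2) by auto
  then have 1: "stp S (vars a) a (And a (Or Bot Top))" using assms by (auto simp: stp_def)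
  have "rstep S (And a (Or Bot Top)) (Or (And a Bot) Top)"
    using assms by (intro switch_inst) auto
  then have 2: "stp S (vars a) (And a (Or Bot Top)) (Or (And a Bot) Top)" using assms
    by (auto simp: stp_def)
  have "acu (Or (And a Bot) Top) Top" using assms by (intro acu.or_top_r) auto
  then have 3: "stp S (vars a) (Or (And a Bot) Top) Top" using assms by (auto simp: stp_def)
  show ?thesis using 1 2 3
    by (meson rtranclp.rtrancl_into_rtrancl rtranclp.rtrancl_refl)
qed

lemma from_bot:
  assumes "switch \<in> S" "linear a"
  shows "(stp S (vars a))\<^sup>*\<^sup>* Bot a"
proof -
  have l: "linear (Or Top a)" using assms by auto
  have "acu Bot (And Bot (Or Top a))" by (rule acu.sym[OF acu.and_bot_l[OF l]])
  then have 1: "stp S (vars a) Bot (And Bot (Or Top a))" using assms by (auto simp: stp_def)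
  have "rstep S (And Bot (Or Top a)) (Or (And Bot Top) a)"
    using assms by (intro switch_inst) auto
  then have 2: "stp S (vars a) (And Bot (Or Top a)) (Or (And Bot Top) a)" using assms
    by (auto simp: stp_def)
  have "acu (Or (And Bot Top) a) (Or Bot a)"
    using assms by (intro acu.ctx_or_l acu.and_top_r) auto
  then have "acu (Or (And Bot Top) a) a" using assms by (meson acu.or_bot_l acu.trans)
  then have 3: "stp S (vars a) (Or (And Bot Top) a) a" using assms by (auto simp: stp_def)
  show ?thesis using 1 2 3
    by (meson rtranclp.rtrancl_into_rtrancl rtranclp.rtrancl_refl)
qed

lemma chain_top:
  assumes "switch \<in> S"
  shows "linear a \<Longrightarrow> (stp S (vars a))\<^sup>*\<^sup>* a (repl X Top a)"
proof (induction a)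
  case (Var x) then show ?case using to_top[OF assms, of "Var x"] by auto
next
  case (NVar x) then show ?case using to_top[OF assms, of "NVar x"] by auto
next
  case (And a b)
  have la': "linear (repl X Top a)" using And by (auto intro: linear_repl)
  have "(stp S (vars a \<union> vars b))\<^sup>*\<^sup>* (And a b) (And (repl X Top a) b)"
    using ctx_andl[OF And.IH(1)] And.prems by auto
  moreover have "(stp S (vars b \<union> vars (repl X Top a)))\<^sup>*\<^sup>* (And (repl X Top a) b) (And (repl X Top a) (repl X Top b))"
    using ctx_andr[OF And.IH(2) la'] And.prems by (auto simp: vars_repl)
  then have "(stp S (vars a \<union> vars b))\<^sup>*\<^sup>* (And (repl X Top a) b) (And (repl X Top a) (repl X Top b))"
    by (rule stp_mono) (auto simp: vars_repl)
  ultimately show ?case by auto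
next
  case (Or a b)
  have la': "linear (repl X Top a)" using Or by (auto intro: linear_repl)
  have "(stp S (vars a \<union> vars b))\<^sup>*\<^sup>* (Or a b) (Or (repl X Top a) b)"
    using ctx_orl[OF Or.IH(1)] Or.prems by auto
  moreover have "(stp S (vars b \<union> vars (repl X Top a)))\<^sup>*\<^sup>* (Or (repl X Top a) b) (Or (repl X Top a) (repl X Top b))"
    using ctx_orr[OF Or.IH(2) la'] Or.prems by (auto simp: vars_repl)
  then have "(stp S (vars a \<union> vars b))\<^sup>*\<^sup>* (Or (repl X Top a) b) (Or (repl X Top a) (repl X Top b))"
    by (rule stp_mono) (auto simp: vars_repl)
  ultimately show ?case by auto
qed auto

lemma chain_bot:
  assumes "switch \<in> S"
  shows "linear a \<Longrightarrow> (stp S (vars a))\<^sup>*\<^sup>* (repl X Bot a) a"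
proof (induction a)
  case (Var x) then show ?case using from_bot[OF assms, of "Var x"] by auto
next
  case (NVar x) then show ?case using from_bot[OF assms, of "NVar x"] by auto
next
  case (And a b)
  have la': "linear (repl X Bot a)" using And by (auto intro: linear_repl)
  have "(stp S (vars b \<union> vars (repl X Bot a)))\<^sup>*\<^sup>* (And (repl X Bot a) (repl X Bot b)) (And (repl X Bot a) b)"
    using ctx_andr[OF And.IH(2) la'] And.prems by (auto simp: vars_repl)
  then have "(stp S (vars a \<union> vars b))\<^sup>*\<^sup>* (And (repl X Bot a) (repl X Bot b)) (And (repl X Bot a) b)"
    by (rule stp_mono) (auto simp: vars_repl)
  moreover have "(stp S (vars a \<union> vars b))\<^sup>*\<^sup>* (And (repl X Bot a) b) (And a b)"
    using ctx_andl[OF And.IH(1)] And.prems by auto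
  ultimately show ?case by auto
next
  case (Or a b)
  have la': "linear (repl X Bot a)" using Or by (auto intro: linear_repl)
  have "(stp S (vars b \<union> vars (repl X Bot a)))\<^sup>*\<^sup>* (Or (repl X Bot a) (repl X Bot b)) (Or (repl X Bot a) b)"
    using ctx_orr[OF Or.IH(2) la'] Or.prems by (auto simp: vars_repl)
  then have "(stp S (vars a \<union> vars b))\<^sup>*\<^sup>* (Or (repl X Bot a) (repl X Bot b)) (Or (repl X Bot a) b)"
    by (rule stp_mono) (auto simp: vars_repl)
  moreover have "(stp S (vars a \<union> vars b))\<^sup>*\<^sup>* (Or (repl X Bot a) b) (Or a b)"
    using ctx_orl[OF Or.IH(1)] Or.prems by auto
  ultimately show ?case by auto
qed auto

lemma stp_deriv: "(stp S V)\<^sup>*\<^sup>* a b \<Longrightarrow> derivable_u S a b"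
  unfolding derivable_u_def
  by (rule mono_rtranclp[rule_format])
     (auto simp: stp_def rstep_u_def intro: acu.refl)

theorem proposition2p14:
  fixes \<phi> \<psi> :: "nat frm" and V1 V2 :: "nat set"
  assumes "linear_on \<phi> V1" and "linear_on \<psi> V2"
    and "linear_inference \<phi> \<psi>"
  shows "\<exists>\<phi>' \<psi>'. linear_on \<phi>' (V1 \<inter> V2) \<and> linear_on \<psi>' (V1 \<inter> V2)
            \<and> linear_inference \<phi>' \<psi>'
            \<and> derivable_u {switch, medial, (\<phi>', \<psi>')} \<phi> \<psi>"
proof -
  define X1 where "X1 = V1 - V2"
  define X2 where "X2 = V2 - V1"
  define p where "p = repl X1 Top \<phi>"
  define q where "q = repl X2 Bot \<psi>"
  have l1: "linear \<phi>" "vars \<phi> = V1" and l2: "linear \<psi>" "vars \<psi> = V2"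
    using assms(1,2) by (auto simp: linear_on_def)
  have lp: "linear_on p (V1 \<inter> V2)" unfolding p_def linear_on_def
    using l1 by (auto simp: vars_repl linear_repl X1_def)
  have lq: "linear_on q (V1 \<inter> V2)" unfolding q_def linear_on_def
    using l2 by (auto simp: vars_repl linear_repl X2_def)
  have sem: "eval \<sigma> q" if ev: "eval \<sigma> p" for \<sigma>
  proof -
    obtain t1 where t1: "\<forall>v. v \<notin> X1 \<longrightarrow> t1 v = \<sigma> v" "eval t1 \<phi> = eval \<sigma> p"
      using repl_sem[OF l1(1), of Top X1 \<sigma>] unfolding p_def by auto
    obtain t2 where t2: "\<forall>v. v \<notin> X2 \<longrightarrow> t2 v = \<sigma> v" "eval t2 \<psi> = eval \<sigma> q"
      using repl_sem[OF l2(1), of Bot X2 \<sigma>] unfolding q_def by auto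
    define t where "t = (\<lambda>v. if v \<in> X1 then t1 v else t2 v)"
    have "eval t \<phi> = eval t1 \<phi>"
      by (rule eval_cong) (use t1 t2 l1 in \<open>auto simp: t_def X1_def X2_def\<close>)
    then have "eval t \<psi>" using assms(3) ev t1 by (auto simp: linear_inference_def)
    moreover have "eval t \<psi> = eval t2 \<psi>"
      by (rule eval_cong) (use l2 in \<open>auto simp: t_def X1_def X2_def\<close>)
    ultimately show ?thesis using t2 by auto
  qed
  have li: "linear_inference p q" using lp lq sem by (auto simp: linear_inference_def linear_on_def)
  let ?S = "{switch, medial, (p, q)}"
  have d1: "derivable_u ?S \<phi> p" unfolding p_def
    by (rule stp_deriv[OF chain_top[OF _ l1(1)]]) auto
  have d3: "derivable_u ?S q \<psi>" unfolding q_def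
    by (rule stp_deriv[OF chain_bot[OF _ l2(1)]]) auto
  have "rstep_u ?S p q" unfolding rstep_u_def using lp lq
    by (auto simp: linear_on_def intro!: acu.refl rstep.base)
  then have d2: "derivable_u ?S p q" unfolding derivable_u_def by auto
  have "derivable_u ?S \<phi> \<psi>" using d1 d2 d3 unfolding derivable_u_def by auto
  then show ?thesis using lp lq li by blast
qed

end
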